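(* Let $\mathbb A_1,\dots,\mathbb A_n\in\mathfrak A$, let $R\le\mathbb A_1\times\cdots\times\mathbb A_n$, let $I\subseteq[n]$, and let $\mathbf a_1,\dots,\mathbf a_k$ be a path in $\mathcal G(\mathrm{pr}_I R)$. Then there are $\mathbf b_1,\dots,\mathbf b_k\in\mathrm{pr}_{[n]\setminus I}R$ such that $(\mathbf a_1,\mathbf b_1),\dots,(\mathbf a_k,\mathbf b_k)$ all belong to $R$ and form a path in $\mathcal G(R)$.
   Context: An algebra is conservative if every subset of its universe is closed under all its basic operations. $\mathfrak A$ is a finite class of finite conservative algebras of the same signature, closed under subalgebras, such that for every $\mathbb A\in\mathfrak A$ (universe $A$) and every 2-element $\{a,b\}\subseteq A$ some term operation of $\mathfrak A$ restricted to $\{a,b\}\cong\{0,1\}$ is a semilattice operation ($\wedge$ or $\vee$), the majority operation, or the affine operation $x-y+z\pmod 2$. For distinct $a,b\in A$, $\{a,b\}$ is a semilattice edge if some term operation restricts to a semilattice operation on it; otherwise a majority edge if some term operation restricts to majority on it; otherwise an affine edge. Fix term operations $x\cdot y$, $p(x,y)$, $g(x,y,z)$, $h(x,y,z)$ of $\mathfrak A$ such that for every $\mathbb A\in\mathfrak A$ and every 2-element $B\subseteq A$: $\cdot$ is a semilattice operation on $B$ if $B$ is a semilattice edge and $x\cdot y=x$ on $B$ otherwise; $g$ is majority on majority edges, $g(x,y,z)=x$ on affine edges, $g(x,y,z)=(x\cdot y)\cdot z$ on semilattice edges; $h$ is affine on affine edges, $h(x,y,z)=x$ on majority edges, $h(x,y,z)=(x\cdot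 y)\cdot z$ on semilattice edges; $p(x,y)=x\cdot y$ on semilattice edges, $p(x,y)=y$ on majority edges, $p(x,y)=x$ on affine edges. A semilattice edge $\{a,b\}$ is directed from $a$ to $b$ if $a\cdot b=b\cdot a=b$. $R\le\mathbb A_1\times\cdots\times\mathbb A_n$ means $R\subseteq A_1\times\cdots\times A_n$ is closed under coordinatewise application of the term operations. $\mathbf a[i]$ is the $i$th coordinate, $[n]=\{1,\dots,n\}$, $\mathrm{pr}_I$ is projection onto the coordinates in $I$; for $\mathbf a\in\mathrm{pr}_IR$, $\mathbf b\in\mathrm{pr}_{[n]\setminus I}R$, $(\mathbf a,\mathbf b)$ is the $n$-tuple agreeing with $\mathbf a$ on $I$ and with $\mathbf b$ elsewhere. Graph $\mathcal G(R)$ (also for projections of $R$): vertices are elements of $R$; $\mathbf a,\mathbf b\in R$ form a semilattice edge directed from $\mathbf a$ to $\mathbf b$ if for each $i$ either $\mathbf a[i]=\mathbf b[i]$ or $\{\mathbf a[i],\mathbf b[i]\}$ is a semilattice edge directed from $\mathbf a[i]$ to $\mathbf b[i]$; they form an affine (majority) edge if for each $i$ either $\mathbf a[i]=\mathbf b[i]$ or $\{\mathbf a[i],\mathbf b[i]\}$ is an affine (majority) edge. A path is a sequence $\mathbf a_1,\dots,\mathbf a_k$ of vertices such that each consecutive pair $\mathbf a_i,\mathbf a_{i+1}$ is either a semilattice edge directed from $\mathbf a_i$ to $\mathbf a_{i+1}$ or an affine edge. *)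

theory Defs
  imports "HOL-Library.FuncSet"
begin

text \<open>An algebra is a pair (universe, interpretation of the operation symbols); all
  algebras share the element type 'a (each has its own universe).\<close>

type_synonym ('a,'f) alg = "'a set \<times> ('f \<Rightarrow> 'a list \<Rightarrow> 'a)"

definition univ :: "('a,'f) alg \<Rightarrow> 'a set" where "univ A = fst A"
definition ops :: "('a,'f) alg \<Rightarrow> 'f \<Rightarrow> 'a list \<Rightarrow> 'a" where "ops A = snd A"

datatype 'f trm = Var nat | Fn 'f "'f trm list"

fun teval :: "('a,'f) alg \<Rightarrow> 'f trm \<Rightarrow> (nat \<Rightarrow> 'a) \<Rightarrow> 'a" where
  "teval A (Var j) env = env j"
| "teval A (Fn f ts) env = ops A f (map (\<lambda>t. teval A t env) ts)"

fun wf_trm :: "('f \<Rightarrow> nat) \<Rightarrow> nat \<Rightarrow> 'f trm \<Rightarrow> bool" where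
  "wf_trm ar m (Var j) = (j < m)"
| "wf_trm ar m (Fn f ts) = (length ts = ar f \<and> (\<forall>t\<in>set ts. wf_trm ar m t))"

definition ev2 :: "('a,'f) alg \<Rightarrow> 'f trm \<Rightarrow> 'a \<Rightarrow> 'a \<Rightarrow> 'a" where
  "ev2 A t x y = teval A t (\<lambda>j. if j = 0 then x else y)"

definition ev3 :: "('a,'f) alg \<Rightarrow> 'f trm \<Rightarrow> 'a \<Rightarrow> 'a \<Rightarrow> 'a \<Rightarrow> 'a" where
  "ev3 A t x y z = teval A t (\<lambda>j. if j = 0 then x else if j = 1 then y else z)"

definition conservative :: "('f \<Rightarrow> nat) \<Rightarrow> ('a,'f) alg \<Rightarrow> bool" where
  "conservative ar A \<longleftrightarrow> (\<forall>B \<subseteq> univ A. \<forall>f xs. length xs = ar f \<longrightarrow> set xs \<subseteq> B \<longrightarrow> ops A f xs \<in> B)"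

text \<open>Semilattice on {a,b} (covers both \<wedge> and \<or> under {a,b} \<cong> {0,1}).\<close>
definition semilat_on :: "('a,'f) alg \<Rightarrow> 'f trm \<Rightarrow> 'a \<Rightarrow> 'a \<Rightarrow> bool" where
  "semilat_on A t a b \<longleftrightarrow> ev2 A t a a = a \<and> ev2 A t b b = b \<and> ev2 A t a b = ev2 A t b a
     \<and> ev2 A t a b \<in> {a, b}"

definition majority_on :: "('a,'f) alg \<Rightarrow> 'f trm \<Rightarrow> 'a \<Rightarrow> 'a \<Rightarrow> bool" where
  "majority_on A t a b \<longleftrightarrow> (\<forall>x\<in>{a,b}. \<forall>y\<in>{a,b}.
      ev3 A t x x y = x \<and> ev3 A t x y x = x \<and> ev3 A t y x x = x)"

text \<open>The affine operation x - y + z (mod 2) on {a,b}.\<close>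
definition affine_on :: "('a,'f) alg \<Rightarrow> 'f trm \<Rightarrow> 'a \<Rightarrow> 'a \<Rightarrow> bool" where
  "affine_on A t a b \<longleftrightarrow> (\<forall>x\<in>{a,b}. \<forall>y\<in>{a,b}.
      ev3 A t x x y = y \<and> ev3 A t y x x = y \<and> ev3 A t x y x = y)"

definition semilattice_edge :: "('f \<Rightarrow> nat) \<Rightarrow> ('a,'f) alg \<Rightarrow> 'a \<Rightarrow> 'a \<Rightarrow> bool" where
  "semilattice_edge ar A a b \<longleftrightarrow> a \<in> univ A \<and> b \<in> univ A \<and> a \<noteq> b \<and>
     (\<exists>t. wf_trm ar 2 t \<and> semilat_on A t a b)"

definition majority_edge :: "('f \<Rightarrow> nat) \<Rightarrow> ('a,'f) alg \<Rightarrow> 'a \<Rightarrow> 'a \<Rightarrow> bool" where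
  "majority_edge ar A a b \<longleftrightarrow> a \<in> univ A \<and> b \<in> univ A \<and> a \<noteq> b \<and>
     \<not> semilattice_edge ar A a b \<and> (\<exists>t. wf_trm ar 3 t \<and> majority_on A t a b)"

definition affine_edge :: "('f \<Rightarrow> nat) \<Rightarrow> ('a,'f) alg \<Rightarrow> 'a \<Rightarrow> 'a \<Rightarrow> bool" where
  "affine_edge ar A a b \<longleftrightarrow> a \<in> univ A \<and> b \<in> univ A \<and> a \<noteq> b \<and>
     \<not> semilattice_edge ar A a b \<and> \<not> majority_edge ar A a b"

definition sl_dir :: "('f \<Rightarrow> nat) \<Rightarrow> 'f trm \<Rightarrow> ('a,'f) alg \<Rightarrow> 'a \<Rightarrow> 'a \<Rightarrow> bool" where
  "sl_dir ar mul A a b \<longleftrightarrow> semilattice_edge ar A a b \<and> ev2 A mul a b = b \<and> ev2 A mul b a = b"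

definition good_class ::
  "('f \<Rightarrow> nat) \<Rightarrow> ('a,'f) alg set \<Rightarrow> 'f trm \<Rightarrow> 'f trm \<Rightarrow> 'f trm \<Rightarrow> 'f trm \<Rightarrow> bool" where
  "good_class ar K mul p g h \<longleftrightarrow>
     finite K \<and>
     (\<forall>A\<in>K. finite (univ A) \<and> conservative ar A) \<and>
     (\<forall>A\<in>K. \<forall>B. B \<subseteq> univ A \<longrightarrow> B \<noteq> {} \<longrightarrow>
        (\<exists>A'\<in>K. univ A' = B \<and>
           (\<forall>f xs. length xs = ar f \<longrightarrow> set xs \<subseteq> B \<longrightarrow> ops A' f xs = ops A f xs))) \<and>
     (\<forall>A\<in>K. \<forall>a\<in>univ A. \<forall>b\<in>univ A. a \<noteq> b \<longrightarrow>
        (\<exists>t. wf_trm ar 2 t \<and> semilat_on A t a b) \<or>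
        (\<exists>t. wf_trm ar 3 t \<and> majority_on A t a b) \<or>
        (\<exists>t. wf_trm ar 3 t \<and> affine_on A t a b)) \<and>
     wf_trm ar 2 mul \<and> wf_trm ar 2 p \<and> wf_trm ar 3 g \<and> wf_trm ar 3 h \<and>
     (\<forall>A\<in>K. \<forall>a\<in>univ A. \<forall>b\<in>univ A. a \<noteq> b \<longrightarrow>
        (semilattice_edge ar A a b \<longrightarrow>
           semilat_on A mul a b \<and>
           (\<forall>x\<in>{a,b}. \<forall>y\<in>{a,b}. \<forall>z\<in>{a,b}.
              ev3 A g x y z = ev2 A mul (ev2 A mul x y) z \<and>
              ev3 A h x y z = ev2 A mul (ev2 A mul x y) z) \<and>
           (\<forall>x\<in>{a,b}. \<forall>y\<in>{a,b}. ev2 A p x y = ev2 A mul x y)) \<and>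
        (\<not> semilattice_edge ar A a b \<longrightarrow> (\<forall>x\<in>{a,b}. \<forall>y\<in>{a,b}. ev2 A mul x y = x)) \<and>
        (majority_edge ar A a b \<longrightarrow>
           majority_on A g a b \<and>
           (\<forall>x\<in>{a,b}. \<forall>y\<in>{a,b}. \<forall>z\<in>{a,b}. ev3 A h x y z = x) \<and>
           (\<forall>x\<in>{a,b}. \<forall>y\<in>{a,b}. ev2 A p x y = y)) \<and>
        (affine_edge ar A a b \<longrightarrow>
           affine_on A h a b \<and>
           (\<forall>x\<in>{a,b}. \<forall>y\<in>{a,b}. \<forall>z\<in>{a,b}. ev3 A g x y z = x) \<and>
           (\<forall>x\<in>{a,b}. \<forall>y\<in>{a,b}. ev2 A p x y = x)))"

text \<open>n-tuples are functions on {1..n} (extensional: undefined elsewhere).\<close>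

definition subpower :: "('f \<Rightarrow> nat) \<Rightarrow> nat \<Rightarrow> (nat \<Rightarrow> ('a,'f) alg) \<Rightarrow> (nat \<Rightarrow> 'a) set \<Rightarrow> bool" where
  "subpower ar n A R \<longleftrightarrow> R \<subseteq> (\<Pi>\<^sub>E i\<in>{1..n}. univ (A i)) \<and>
     (\<forall>m t rs. wf_trm ar m t \<longrightarrow> (\<forall>j<m. rs j \<in> R) \<longrightarrow>
        (\<lambda>i\<in>{1..n}. teval (A i) t (\<lambda>j. rs j i)) \<in> R)"

definition proj :: "nat set \<Rightarrow> (nat \<Rightarrow> 'a) set \<Rightarrow> (nat \<Rightarrow> 'a) set" where
  "proj I R = (\<lambda>r. restrict r I) ` R"

text \<open>(a, b): agrees with a on I and with b elsewhere.\<close>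
definition merge :: "nat set \<Rightarrow> (nat \<Rightarrow> 'a) \<Rightarrow> (nat \<Rightarrow> 'a) \<Rightarrow> nat \<Rightarrow> 'a" where
  "merge I a b = (\<lambda>i. if i \<in> I then a i else b i)"

definition tup_sl_edge :: "('f \<Rightarrow> nat) \<Rightarrow> 'f trm \<Rightarrow> (nat \<Rightarrow> ('a,'f) alg) \<Rightarrow> nat set
    \<Rightarrow> (nat \<Rightarrow> 'a) \<Rightarrow> (nat \<Rightarrow> 'a) \<Rightarrow> bool" where
  "tup_sl_edge ar mul A J x y \<longleftrightarrow> (\<forall>i\<in>J. x i = y i \<or> sl_dir ar mul (A i) (x i) (y i))"

definition tup_aff_edge :: "('f \<Rightarrow> nat) \<Rightarrow> (nat \<Rightarrow> ('a,'f) alg) \<Rightarrow> nat set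
    \<Rightarrow> (nat \<Rightarrow> 'a) \<Rightarrow> (nat \<Rightarrow> 'a) \<Rightarrow> bool" where
  "tup_aff_edge ar A J x y \<longleftrightarrow> (\<forall>i\<in>J. x i = y i \<or> affine_edge ar (A i) (x i) (y i))"

definition is_path :: "('f \<Rightarrow> nat) \<Rightarrow> 'f trm \<Rightarrow> (nat \<Rightarrow> ('a,'f) alg) \<Rightarrow> nat set
    \<Rightarrow> (nat \<Rightarrow> 'a) set \<Rightarrow> (nat \<Rightarrow> 'a) list \<Rightarrow> bool" where
  "is_path ar mul A J S xs \<longleftrightarrow> set xs \<subseteq> S \<and>
     (\<forall>j. Suc j < length xs \<longrightarrow>
        tup_sl_edge ar mul A J (xs ! j) (xs ! Suc j) \<or> tup_aff_edge ar A J (xs ! j) (xs ! Suc j))"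

end

theory Submission imports Defs begin
lemma gc_last:
  assumes "good_class ar K mul p g h" "A \<in> K" "x \<in> univ A" "y \<in> univ A" "x \<noteq> y"
  shows "(semilattice_edge ar A x y \<longrightarrow>
           semilat_on A mul x y \<and>
           (\<forall>u\<in>{x,y}. \<forall>v\<in>{x,y}. \<forall>w\<in>{x,y}.
              ev3 A g u v w = ev2 A mul (ev2 A mul u v) w \<and>
              ev3 A h u v w = ev2 A mul (ev2 A mul u v) w) \<and>
           (\<forall>u\<in>{x,y}. \<forall>v\<in>{x,y}. ev2 A p u v = ev2 A mul u v)) \<and>
        (\<not> semilattice_edge ar A x y \<longrightarrow> (\<forall>u\<in>{x,y}. \<forall>v\<in>{x,y}. ev2 A mul u v = u)) \<and>
        (majority_edge ar A x y \<longrightarrow>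
           majority_on A g x y \<and>
           (\<forall>u\<in>{x,y}. \<forall>v\<in>{x,y}. \<forall>w\<in>{x,y}. ev3 A h u v w = u) \<and>
           (\<forall>u\<in>{x,y}. \<forall>v\<in>{x,y}. ev2 A p u v = v)) \<and>
        (affine_edge ar A x y \<longrightarrow>
           affine_on A h x y \<and>
           (\<forall>u\<in>{x,y}. \<forall>v\<in>{x,y}. \<forall>w\<in>{x,y}. ev3 A g u v w = u) \<and>
           (\<forall>u\<in>{x,y}. \<forall>v\<in>{x,y}. ev2 A p u v = u))"
proof -
  have "\<forall>A\<in>K. \<forall>a\<in>univ A. \<forall>b\<in>univ A. a \<noteq> b \<longrightarrow>
        (semilattice_edge ar A a b \<longrightarrow>
           semilat_on A mul a b \<and>
           (\<forall>x\<in>{a,b}. \<forall>y\<in>{a,b}. \<forall>z\<in>{a,b}.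
              ev3 A g x y z = ev2 A mul (ev2 A mul x y) z \<and>
              ev3 A h x y z = ev2 A mul (ev2 A mul x y) z) \<and>
           (\<forall>x\<in>{a,b}. \<forall>y\<in>{a,b}. ev2 A p x y = ev2 A mul x y)) \<and>
        (\<not> semilattice_edge ar A a b \<longrightarrow> (\<forall>x\<in>{a,b}. \<forall>y\<in>{a,b}. ev2 A mul x y = x)) \<and>
        (majority_edge ar A a b \<longrightarrow>
           majority_on A g a b \<and>
           (\<forall>x\<in>{a,b}. \<forall>y\<in>{a,b}. \<forall>z\<in>{a,b}. ev3 A h x y z = x) \<and>
           (\<forall>x\<in>{a,b}. \<forall>y\<in>{a,b}. ev2 A p x y = y)) \<and>
        (affine_edge ar A a b \<longrightarrow>
           affine_on A h a b \<and>
           (\<forall>x\<in>{a,b}. \<forall>y\<in>{a,b}. \<forall>z\<in>{a,b}. ev3 A g x y z = x) \<and>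
           (\<forall>x\<in>{a,b}. \<forall>y\<in>{a,b}. ev2 A p x y = x))"
    using assms(1) unfolding good_class_def by (elim conjE) assumption
  from this[rule_format, OF assms(2) assms(3) assms(4) assms(5)] show ?thesis .
qed
lemma teval_in:
  assumes "conservative ar A" "B \<subseteq> univ A"
  shows "wf_trm ar k t \<Longrightarrow> (\<forall>j<k. env j \<in> B) \<Longrightarrow> teval A t env \<in> B"
proof (induction t)
  case (Var j)
  then show ?case by simp
next
  case (Fn f ts)
  have "set (map (\<lambda>t. teval A t env) ts) \<subseteq> B" using Fn by auto
  moreover have "length (map (\<lambda>t. teval A t env) ts) = ar f" using Fn by simp
  ultimately show ?case using assms unfolding conservative_def by simp
qed

lemma ev2_in:
  assumes "conservative ar A" "wf_trm ar 2 t" "x \<in> univ A" "y \<in> univ A"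
  shows "ev2 A t x y \<in> {x, y}"
  unfolding ev2_def
  by (rule teval_in[OF assms(1) _ assms(2)]) (use assms in auto)

lemma ev2_idem:
  assumes "conservative ar A" "wf_trm ar 2 t" "x \<in> univ A"
  shows "ev2 A t x x = x"
  using ev2_in[OF assms(1,2,3,3)] by simp

lemma ev3_idem:
  assumes "conservative ar A" "wf_trm ar 3 t" "x \<in> univ A"
  shows "ev3 A t x x x = x"
proof -
  have "ev3 A t x x x \<in> {x}"
    unfolding ev3_def
    by (rule teval_in[OF assms(1) _ assms(2)]) (use assms in auto)
  then show ?thesis by simp
qed

lemma gc_cons: "good_class ar K mul p g h \<Longrightarrow> A \<in> K \<Longrightarrow> conservative ar A"
  unfolding good_class_def by auto

lemma gc_wf: "good_class ar K mul p g h \<Longrightarrow> wf_trm ar 2 mul \<and> wf_trm ar 3 h"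
  unfolding good_class_def by auto

lemma gc_pair:
  assumes "good_class ar K mul p g h" "A \<in> K" "x \<in> univ A" "y \<in> univ A" "x \<noteq> y"
  shows "(semilattice_edge ar A x y \<longrightarrow> semilat_on A mul x y \<and>
            ev3 A h x x y = ev2 A mul (ev2 A mul x x) y) \<and>
         (\<not> semilattice_edge ar A x y \<longrightarrow> ev2 A mul x y = x) \<and>
         (majority_edge ar A x y \<longrightarrow> ev3 A h x x y = x) \<and>
         (affine_edge ar A x y \<longrightarrow> ev3 A h x x y = y)"
proof -
  note H = gc_last[OF assms]
  show ?thesis
  proof (intro conjI impI)
    assume "semilattice_edge ar A x y"
    with H show "semilat_on A mul x y" by blast
    from H \<open>semilattice_edge ar A x y\<close> show "ev3 A h x x y = ev2 A mul (ev2 A mul x x) y" by blast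
  next
    assume "\<not> semilattice_edge ar A x y"
    with H show "ev2 A mul x y = x" by blast
  next
    assume "majority_edge ar A x y"
    with H show "ev3 A h x x y = x" by blast
  next
    assume "affine_edge ar A x y"
    with H have "affine_on A h x y" by blast
    then show "ev3 A h x x y = y" unfolding affine_on_def by blast
  qed
qed

lemma sl_step:
  assumes gc: "good_class ar K mul p g h" and AK: "A \<in> K" and xy: "x \<in> univ A" "y \<in> univ A"
  shows "(x = ev2 A mul x y \<or> sl_dir ar mul A x (ev2 A mul x y)) \<and>
         ev2 A mul (ev2 A mul x y) y = ev2 A mul x y"
proof -
  have c: "conservative ar A" using gc_cons[OF gc AK] .
  have w: "wf_trm ar 2 mul" using gc_wf[OF gc] by blast
  show ?thesis
  proof (cases "x = y")
    case True
    then show ?thesis using ev2_idem[OF c w xy(1)] by simp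
  next
    case False
    note P = gc_pair[OF gc AK xy False]
    have inn: "ev2 A mul x y \<in> {x, y}" using ev2_in[OF c w xy] .
    show ?thesis
    proof (cases "ev2 A mul x y = x")
      case True
      then show ?thesis by simp
    next
      case nx: False
      then have e: "ev2 A mul x y = y" using inn by blast
      have sl: "semilattice_edge ar A x y" using P nx by blast
      then have "ev2 A mul y x = ev2 A mul x y" using P unfolding semilat_on_def by metis
      then have "sl_dir ar mul A x y" using sl e unfolding sl_dir_def by simp
      then show ?thesis using e ev2_idem[OF c w xy(2)] by simp
    qed
  qed
qed

lemma aff_step:
  assumes gc: "good_class ar K mul p g h" and AK: "A \<in> K" and xy: "x \<in> univ A" "y \<in> univ A"
    and m: "ev2 A mul x y = x"
  shows "(x = ev3 A h x x y \<or> affine_edge ar A x (ev3 A h x x y)) \<and>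
         ev2 A mul (ev3 A h x x y) y = ev3 A h x x y"
proof -
  have c: "conservative ar A" using gc_cons[OF gc AK] .
  have w: "wf_trm ar 2 mul" "wf_trm ar 3 h" using gc_wf[OF gc] by blast+
  show ?thesis
  proof (cases "x = y")
    case True
    then show ?thesis using ev2_idem[OF c w(1) xy(1)] ev3_idem[OF c w(2) xy(1)] by simp
  next
    case False
    note P = gc_pair[OF gc AK xy False]
    show ?thesis
    proof (cases "semilattice_edge ar A x y")
      case True
      then have "ev3 A h x x y = x" using P m ev2_idem[OF c w(1) xy(1)] by simp
      then show ?thesis using m by simp
    next
      case ns: False
      show ?thesis
      proof (cases "majority_edge ar A x y")
        case True
        then have "ev3 A h x x y = x" using P by blast
        then show ?thesis using m by simp
      next
        case False
        then have a: "affine_edge ar A x y" using ns xy \<open>x \<noteq> y\<close> unfolding affine_edge_def by blast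
        then have "ev3 A h x x y = y" using P by blast
        then show ?thesis using a ev2_idem[OF c w(1) xy(2)] by simp
      qed
    qed
  qed
qed

lemma J_sl:
  assumes gc: "good_class ar K mul p g h" and AK: "A \<in> K" and xy: "x \<in> univ A"
    and e: "x = y \<or> sl_dir ar mul A x y"
  shows "ev2 A mul x y = y"
  using e ev2_idem[OF gc_cons[OF gc AK] _ xy] gc_wf[OF gc] unfolding sl_dir_def by auto

lemma J_aff:
  assumes gc: "good_class ar K mul p g h" and AK: "A \<in> K" and xy: "x \<in> univ A"
    and e: "x = y \<or> affine_edge ar A x y"
  shows "ev3 A h x x y = y \<and> ev2 A mul x y = x"
proof (cases "x = y")
  case True
  have c: "conservative ar A" using gc_cons[OF gc AK] .
  have w: "wf_trm ar 2 mul" "wf_trm ar 3 h" using gc_wf[OF gc] by blast+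
  show ?thesis using True ev2_idem[OF c w(1) xy] ev3_idem[OF c w(2) xy] by simp
next
  case False
  then have a: "affine_edge ar A x y" using e by blast
  then have y: "y \<in> univ A" unfolding affine_edge_def by blast
  note P = gc_pair[OF gc AK xy y False]
  show ?thesis using a P unfolding affine_edge_def by blast
qed


lemma proj_mem:
  assumes sp: "subpower ar n A R" and S: "S \<subseteq> {1..n}" and y: "y \<in> proj S R" and i: "i \<in> S"
  shows "y i \<in> univ (A i)"
proof -
  obtain r where r: "r \<in> R" "y = restrict r S" using y unfolding proj_def by blast
  have "r \<in> (\<Pi>\<^sub>E i\<in>{1..n}. univ (A i))" using sp r unfolding subpower_def by blast
  then show ?thesis using r i S by auto
qed

lemma proj_ext:
  assumes y: "y \<in> proj S R" and i: "i \<notin> S"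
  shows "y i = undefined"
  using y i unfolding proj_def by auto

lemma proj_restrict:
  assumes y: "y \<in> proj S R"
  shows "restrict y S = y"
  using y unfolding proj_def by auto

lemma proj_closed2:
  assumes sp: "subpower ar n A R" and S: "S \<subseteq> {1..n}" and w: "wf_trm ar 2 t"
    and y: "y \<in> proj S R" and z: "z \<in> proj S R"
  shows "(\<lambda>i\<in>S. ev2 (A i) t (y i) (z i)) \<in> proj S R"
proof -
  obtain r where r: "r \<in> R" "y = restrict r S" using y unfolding proj_def by blast
  obtain r' where r': "r' \<in> R" "z = restrict r' S" using z unfolding proj_def by blast
  define rs where "rs = (\<lambda>j::nat. if j = 0 then r else r')"
  have "\<forall>j<2. rs j \<in> R" using r r' unfolding rs_def by auto
  then have q: "(\<lambda>i\<in>{1..n}. teval (A i) t (\<lambda>j. rs j i)) \<in> R"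
    using sp w unfolding subpower_def by blast
  have e: "restrict (\<lambda>i\<in>{1..n}. teval (A i) t (\<lambda>j. rs j i)) S = (\<lambda>i\<in>S. ev2 (A i) t (y i) (z i))"
  proof (rule ext)
    fix i
    show "restrict (\<lambda>i\<in>{1..n}. teval (A i) t (\<lambda>j. rs j i)) S i = (\<lambda>i\<in>S. ev2 (A i) t (y i) (z i)) i"
    proof (cases "i \<in> S")
      case True
      have "(\<lambda>j. rs j i) = (\<lambda>j. if j = 0 then y i else z i)"
        using True r r' unfolding rs_def by auto
      then show ?thesis using True S unfolding ev2_def by auto
    qed simp
  qed
  show ?thesis unfolding proj_def
    by (rule image_eqI[where f="\<lambda>r. restrict r S", OF e[symmetric] q])
qed

lemma proj_closed3:
  assumes sp: "subpower ar n A R" and S: "S \<subseteq> {1..n}" and w: "wf_trm ar 3 t"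
    and y: "y \<in> proj S R" and z: "z \<in> proj S R"
  shows "(\<lambda>i\<in>S. ev3 (A i) t (y i) (y i) (z i)) \<in> proj S R"
proof -
  obtain r where r: "r \<in> R" "y = restrict r S" using y unfolding proj_def by blast
  obtain r' where r': "r' \<in> R" "z = restrict r' S" using z unfolding proj_def by blast
  define rs where "rs = (\<lambda>j::nat. if j = 0 then r else if j = 1 then r else r')"
  have "\<forall>j<3. rs j \<in> R" using r r' unfolding rs_def by auto
  then have q: "(\<lambda>i\<in>{1..n}. teval (A i) t (\<lambda>j. rs j i)) \<in> R"
    using sp w unfolding subpower_def by blast
  have e: "restrict (\<lambda>i\<in>{1..n}. teval (A i) t (\<lambda>j. rs j i)) S = (\<lambda>i\<in>S. ev3 (A i) t (y i) (y i) (z i))"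
  proof (rule ext)
    fix i
    show "restrict (\<lambda>i\<in>{1..n}. teval (A i) t (\<lambda>j. rs j i)) S i = (\<lambda>i\<in>S. ev3 (A i) t (y i) (y i) (z i)) i"
    proof (cases "i \<in> S")
      case True
      have "(\<lambda>j. rs j i) = (\<lambda>j. if j = 0 then y i else if j = 1 then y i else z i)"
        using True r r' unfolding rs_def by auto
      then show ?thesis using True S unfolding ev3_def by auto
    qed simp
  qed
  show ?thesis unfolding proj_def
    by (rule image_eqI[where f="\<lambda>r. restrict r S", OF e[symmetric] q])
qed

lemma path_snoc:
  assumes P: "is_path ar mul A S T ys" and ne: "ys \<noteq> []" and y: "y \<in> T"
    and e: "tup_sl_edge ar mul A S (last ys) y \<or> tup_aff_edge ar A S (last ys) y"
  shows "is_path ar mul A S T (ys @ [y])"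
  unfolding is_path_def
proof (intro conjI allI impI)
  show "set (ys @ [y]) \<subseteq> T" using P y unfolding is_path_def by auto
next
  fix j assume j: "Suc j < length (ys @ [y])"
  show "tup_sl_edge ar mul A S ((ys @ [y]) ! j) ((ys @ [y]) ! Suc j) \<or>
        tup_aff_edge ar A S ((ys @ [y]) ! j) ((ys @ [y]) ! Suc j)"
  proof (cases "Suc j < length ys")
    case True
    then show ?thesis using P unfolding is_path_def by (simp add: nth_append)
  next
    case False
    then have "j = length ys - 1" using j by simp
    then have "(ys @ [y]) ! j = last ys" "(ys @ [y]) ! Suc j = y"
      using ne by (auto simp: nth_append last_conv_nth)
    then show ?thesis using e by simp
  qed
qed


lemma extend_one:
  assumes gc: "good_class ar K mul p g h" and AK: "\<forall>i\<in>{1..n}. A i \<in> K"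
    and sp: "subpower ar n A R" and J: "J \<subseteq> {1..n}" and m: "m \<in> {1..n}" "m \<notin> J"
    and P: "is_path ar mul A J (proj J R) xs"
  shows "\<exists>ys. length ys = length xs \<and> (\<forall>j<length xs. restrict (ys!j) J = xs!j) \<and>
           is_path ar mul A (insert m J) (proj (insert m J) R) ys"
proof (cases "xs = []")
  case True
  then show ?thesis unfolding is_path_def by auto
next
  case nonempty: False
  define S where "S = insert m J"
  define T where "T = proj S R"
  have S: "S \<subseteq> {1..n}" using J m unfolding S_def by auto
  have JS: "J \<subseteq> S" unfolding S_def by auto
  have wm: "wf_trm ar 2 mul" and wh: "wf_trm ar 3 h" using gc_wf[OF gc] by blast+
  have xsJ: "\<And>l. l < length xs \<Longrightarrow> xs ! l \<in> proj J R" using P unfolding is_path_def by auto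
  have fib: "\<exists>b\<in>T. restrict b J = xs!l" if l: "l < length xs" for l
  proof -
    obtain r where r: "r \<in> R" "xs!l = restrict r J" using xsJ[OF l] unfolding proj_def by blast
    have "restrict r S \<in> T" using r unfolding T_def proj_def by blast
    moreover have "restrict (restrict r S) J = xs!l" using r JS by (simp add: Int_absorb1)
    ultimately show ?thesis by blast
  qed
  have agree: "c i = x i" if "restrict c J = x" "i \<in> J" for c x i
    using that by auto
  have memT: "c i \<in> univ (A i)" if "c \<in> T" "i \<in> S" for c i
    using proj_mem[OF sp S] that unfolding T_def by blast
  have AKi: "A i \<in> K" if "i \<in> S" for i using AK S that by blast
  have Z: "\<forall>b\<in>T. restrict b J = xs!l \<longrightarrow>
            (\<exists>ys. length ys = Suc l \<and> (\<forall>j\<le>l. restrict (ys!j) J = xs!j) \<and>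
                  is_path ar mul A S T ys \<and> ev2 (A m) mul (last ys m) (b m) = last ys m)"
    if "l < length xs" for l
    using that
  proof (induction l)
    case 0
    show ?case
    proof (intro ballI impI)
      fix b assume b: "b \<in> T" "restrict b J = xs!0"
      have "ev2 (A m) mul (b m) (b m) = b m"
        using ev2_idem[OF gc_cons[OF gc AKi] wm memT[OF b(1)]] unfolding S_def by simp
      then show "\<exists>ys. length ys = Suc 0 \<and> (\<forall>j\<le>0. restrict (ys!j) J = xs!j) \<and>
                  is_path ar mul A S T ys \<and> ev2 (A m) mul (last ys m) (b m) = last ys m"
        using b by (intro exI[of _ "[b]"]) (auto simp: is_path_def)
    qed
  next
    case (Suc l)
    have IH: "\<forall>b\<in>T. restrict b J = xs!l \<longrightarrow>
            (\<exists>ys. length ys = Suc l \<and> (\<forall>j\<le>l. restrict (ys!j) J = xs!j) \<and>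
                  is_path ar mul A S T ys \<and> ev2 (A m) mul (last ys m) (b m) = last ys m)"
      using Suc.IH[OF Suc_lessD[OF Suc.prems]] .
    have lS: "Suc l < length xs" using Suc by simp
    define x where "x = xs!l"
    define x' where "x' = xs!Suc l"
    have xJ: "x \<in> proj J R" and x'J: "x' \<in> proj J R" using xsJ lS unfolding x_def x'_def by auto
    have edge: "tup_sl_edge ar mul A J x x' \<or> tup_aff_edge ar A J x x'"
      using P lS unfolding is_path_def x_def x'_def by blast
    obtain b0 where b0: "b0 \<in> T" "restrict b0 J = x" using fib[OF Suc_lessD[OF lS]] unfolding x_def by blast
    obtain ys0 where ys0: "length ys0 = Suc l" "\<forall>j\<le>l. restrict (ys0!j) J = xs!j"
        "is_path ar mul A S T ys0" "ev2 (A m) mul (last ys0 m) (b0 m) = last ys0 m"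
      using IH b0 unfolding x_def by blast
    have last_ys: "last ys = ys ! l" if "length ys = Suc l" for ys
      using that by (metis Zero_not_Suc diff_Suc_1 last_conv_nth list.size(3))
    have lastT: "last ys \<in> T" if "length ys = Suc l" "is_path ar mul A S T ys" for ys
      using that unfolding is_path_def by (metis last_in_set list.size(3) nat.simps(3) subsetD)
    have extend: "\<exists>ys'. length ys' = Suc (Suc l) \<and> (\<forall>j\<le>Suc l. restrict (ys'!j) J = xs!j) \<and>
                  is_path ar mul A S T ys' \<and> ev2 (A m) mul (last ys' m) (b m) = last ys' m"
      if ys: "length ys = Suc l" "\<forall>j\<le>l. restrict (ys!j) J = xs!j" "is_path ar mul A S T ys"
        and c': "c' \<in> T" "restrict c' J = x'"
        and e: "tup_sl_edge ar mul A S (last ys) c' \<or> tup_aff_edge ar A S (last ys) c'"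
        and lm: "ev2 (A m) mul (c' m) (b m) = c' m"
      for ys c' b
    proof (intro exI[of _ "ys @ [c']"] conjI)
      show "length (ys @ [c']) = Suc (Suc l)" using ys by simp
      show "\<forall>j\<le>Suc l. restrict ((ys @ [c'])!j) J = xs!j"
      proof (intro allI impI)
        fix j assume "j \<le> Suc l"
        then consider "j \<le> l" | "j = Suc l" by linarith
        then show "restrict ((ys @ [c'])!j) J = xs!j"
        proof cases
          case 1 then show ?thesis using ys by (simp add: nth_append)
        next
          case 2 then show ?thesis using ys c' unfolding x'_def by (simp add: nth_append)
        qed
      qed
      show "is_path ar mul A S T (ys @ [c'])"
      proof -
        have "ys \<noteq> []" using ys(1) by auto
        then show ?thesis using path_snoc[OF ys(3) _ c'(1) e] by blast
      qed
      show "ev2 (A m) mul (last (ys @ [c']) m) (b m) = last (ys @ [c']) m" using lm by simp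
    qed
    show ?case
    proof (intro ballI impI)
      fix b assume b: "b \<in> T" "restrict b J = xs!Suc l"
      then have bx': "restrict b J = x'" unfolding x'_def by simp
      show "\<exists>ys'. length ys' = Suc (Suc l) \<and> (\<forall>j\<le>Suc l. restrict (ys'!j) J = xs!j) \<and>
                  is_path ar mul A S T ys' \<and> ev2 (A m) mul (last ys' m) (b m) = last ys' m"
      proof (cases "tup_sl_edge ar mul A J x x'")
        case True
        define c0 where "c0 = last ys0"
        have c0T: "c0 \<in> T" using lastT ys0 unfolding c0_def by blast
        have c0x: "restrict c0 J = x" using ys0(2) last_ys[OF ys0(1)] unfolding c0_def x_def by simp
        define c' where "c' = (\<lambda>i\<in>S. ev2 (A i) mul (c0 i) (b i))"
        have c'T: "c' \<in> T" unfolding c'_def T_def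
          using proj_closed2[OF sp S wm] c0T b(1) unfolding T_def by blast
        have c'x': "restrict c' J = x'"
        proof (rule ext)
          fix i show "restrict c' J i = x' i"
          proof (cases "i \<in> J")
            case True
            have "x i = x' i \<or> sl_dir ar mul (A i) (x i) (x' i)" using \<open>tup_sl_edge ar mul A J x x'\<close> True
              unfolding tup_sl_edge_def by blast
            moreover have "x i \<in> univ (A i)" using proj_mem[OF sp J xJ True] .
            ultimately have "ev2 (A i) mul (x i) (x' i) = x' i"
              using J_sl[OF gc AKi] True JS by blast
            then show ?thesis using True JS agree[OF c0x True] agree[OF bx' True] unfolding c'_def by (simp add: subsetD)
          qed (simp add: proj_ext[OF x'J])
        qed
        have e: "tup_sl_edge ar mul A S c0 c'"
          unfolding tup_sl_edge_def
        proof
          fix i assume i: "i \<in> S"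
          show "c0 i = c' i \<or> sl_dir ar mul (A i) (c0 i) (c' i)"
          proof (cases "i \<in> J")
            case True
            then show ?thesis using \<open>tup_sl_edge ar mul A J x x'\<close> agree[OF c0x True] agree[OF c'x' True]
              unfolding tup_sl_edge_def by simp
          next
            case False
            then have "i = m" using i unfolding S_def by simp
            then show ?thesis using sl_step[OF gc AKi[OF i] memT[OF c0T i] memT[OF b(1) i]] i
              unfolding c'_def by simp
          qed
        qed
        have mS: "m \<in> S" unfolding S_def by simp
        have lm: "ev2 (A m) mul (c' m) (b m) = c' m"
          using sl_step[OF gc AKi[OF mS] memT[OF c0T mS] memT[OF b(1) mS]] mS
          unfolding c'_def by simp
        show ?thesis using extend[of ys0 c' b, OF ys0(1-3) c'T c'x' disjI1[OF e[unfolded c0_def]] lm] .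
      next
        case False
        then have aff: "tup_aff_edge ar A J x x'" using edge by blast
        have mS: "m \<in> S" unfolding S_def by simp
        have Jaff: "ev3 (A i) h (x i) (x i) (x' i) = x' i \<and> ev2 (A i) mul (x i) (x' i) = x i"
          if i: "i \<in> J" for i
        proof -
          have "x i = x' i \<or> affine_edge ar (A i) (x i) (x' i)" using aff i
            unfolding tup_aff_edge_def by blast
          moreover have "x i \<in> univ (A i)" using proj_mem[OF sp J xJ i] .
          ultimately show ?thesis using J_aff[OF gc AKi] i JS by blast
        qed
        obtain ys where ys: "length ys = Suc l" "\<forall>j\<le>l. restrict (ys!j) J = xs!j"
            "is_path ar mul A S T ys" "ev2 (A m) mul (last ys m) (b m) = last ys m"
        proof (cases "ev2 (A m) mul (last ys0 m) (b m) = last ys0 m")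
          case True
          then show ?thesis using that ys0 by blast
        next
          case ne: False
          define c0 where "c0 = last ys0"
          have c0T: "c0 \<in> T" using lastT ys0 unfolding c0_def by blast
          have c0x: "restrict c0 J = x" using ys0(2) last_ys[OF ys0(1)] unfolding c0_def x_def by simp
          define b2 where "b2 = (\<lambda>i\<in>S. ev2 (A i) mul (c0 i) (b i))"
          have b2T: "b2 \<in> T" unfolding b2_def
            using proj_closed2[OF sp S wm] c0T b(1) unfolding T_def by blast
          have b2x: "restrict b2 J = x"
          proof (rule ext)
            fix i show "restrict b2 J i = x i"
            proof (cases "i \<in> J")
              case True
              then show ?thesis using Jaff[OF True] JS agree[OF c0x True] agree[OF bx' True]
                unfolding b2_def by auto
            qed (simp add: proj_ext[OF xJ])
          qed
          have "ev2 (A m) mul (c0 m) (b m) \<in> {c0 m, b m}"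
            using ev2_in[OF gc_cons[OF gc AKi[OF mS]] wm memT[OF c0T mS] memT[OF b(1) mS]] .
          then have b2m: "b2 m = b m" using ne mS unfolding b2_def c0_def by auto
          obtain ys1 where ys1: "length ys1 = Suc l" "\<forall>j\<le>l. restrict (ys1!j) J = xs!j"
              "is_path ar mul A S T ys1" "ev2 (A m) mul (last ys1 m) (b2 m) = last ys1 m"
            using IH b2T b2x unfolding x_def by blast
          then show ?thesis using that b2m by simp
        qed
        define c where "c = last ys"
        have cT: "c \<in> T" using lastT ys unfolding c_def by blast
        have cx: "restrict c J = x" using ys(2) last_ys[OF ys(1)] unfolding c_def x_def by simp
        define c' where "c' = (\<lambda>i\<in>S. ev3 (A i) h (c i) (c i) (b i))"
        have c'T: "c' \<in> T" unfolding c'_def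
          using proj_closed3[OF sp S wh] cT b(1) unfolding T_def by blast
        have c'x': "restrict c' J = x'"
        proof (rule ext)
          fix i show "restrict c' J i = x' i"
          proof (cases "i \<in> J")
            case True
            then show ?thesis using Jaff[OF True] JS agree[OF cx True] agree[OF bx' True]
              unfolding c'_def by auto
          qed (simp add: proj_ext[OF x'J])
        qed
        have st: "(c m = ev3 (A m) h (c m) (c m) (b m) \<or> affine_edge ar (A m) (c m) (ev3 (A m) h (c m) (c m) (b m))) \<and>
             ev2 (A m) mul (ev3 (A m) h (c m) (c m) (b m)) (b m) = ev3 (A m) h (c m) (c m) (b m)"
          using aff_step[OF gc AKi[OF mS] memT[OF cT mS] memT[OF b(1) mS]] ys(4) unfolding c_def by blast
        have e: "tup_aff_edge ar A S c c'"
          unfolding tup_aff_edge_def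
        proof
          fix i assume i: "i \<in> S"
          show "c i = c' i \<or> affine_edge ar (A i) (c i) (c' i)"
          proof (cases "i \<in> J")
            case True
            then show ?thesis using aff agree[OF cx True] agree[OF c'x' True]
              unfolding tup_aff_edge_def by simp
          next
            case False
            then have "i = m" using i unfolding S_def by simp
            then show ?thesis using st i unfolding c'_def by simp
          qed
        qed
        have lm: "ev2 (A m) mul (c' m) (b m) = c' m"
          using st mS unfolding c'_def by simp
        show ?thesis using extend[of ys c' b, OF ys(1-3) c'T c'x' disjI2[OF e[unfolded c_def]] lm] .
      qed
    qed
  qed
  obtain k where k: "length xs = Suc k" using nonempty by (cases xs) auto
  obtain b where b: "b \<in> T" "restrict b J = xs!k" using fib k by force
  obtain ys where ys: "length ys = Suc k" "\<forall>j\<le>k. restrict (ys!j) J = xs!j" "is_path ar mul A S T ys"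
    using Z[of k] k b by auto
  show ?thesis
    using ys k unfolding S_def T_def by (intro exI[of _ ys]) auto
qed


lemma lift_all:
  assumes gc: "good_class ar K mul p g h" and AK: "\<forall>i\<in>{1..n}. A i \<in> K"
    and sp: "subpower ar n A R" and I: "I \<subseteq> {1..n}"
    and P: "is_path ar mul A I (proj I R) as"
  shows "finite D \<Longrightarrow> D \<subseteq> {1..n} - I \<Longrightarrow>
    \<exists>ys. length ys = length as \<and> (\<forall>j<length as. restrict (ys!j) I = as!j) \<and>
       is_path ar mul A (I \<union> D) (proj (I \<union> D) R) ys"
proof (induction D rule: finite_induct)
  case empty
  have "\<forall>j<length as. restrict (as!j) I = as!j"
    using P proj_restrict unfolding is_path_def by (metis nth_mem subsetD)
  then show ?case using P by (intro exI[of _ as]) simp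
next
  case (insert m D)
  then obtain ys where ys: "length ys = length as" "\<forall>j<length as. restrict (ys!j) I = as!j"
       "is_path ar mul A (I \<union> D) (proj (I \<union> D) R) ys" by blast
  have J: "I \<union> D \<subseteq> {1..n}" using I insert by blast
  have m: "m \<in> {1..n}" "m \<notin> I \<union> D" using insert by blast+
  obtain zs where zs: "length zs = length ys" "\<forall>j<length ys. restrict (zs!j) (I \<union> D) = ys!j"
      "is_path ar mul A (insert m (I \<union> D)) (proj (insert m (I \<union> D)) R) zs"
    using extend_one[OF gc AK sp J m ys(3)] by blast
  have "\<forall>j<length as. restrict (zs!j) I = as!j"
  proof (intro allI impI)
    fix j assume j: "j < length as"
    have "restrict (zs!j) I = restrict (restrict (zs!j) (I \<union> D)) I" by (simp add: Int_absorb1)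
    also have "\<dots> = as!j" using zs(2) ys j by simp
    finally show "restrict (zs!j) I = as!j" .
  qed
  moreover have "insert m (I \<union> D) = I \<union> insert m D" by blast
  ultimately show ?case using zs ys by (intro exI[of _ zs]) simp
qed

theorem lemma2p3:
  fixes ar :: "'f \<Rightarrow> nat" and K :: "('a,'f) alg set"
    and mul p g h :: "'f trm"
    and n :: nat and A :: "nat \<Rightarrow> ('a,'f) alg" and R :: "(nat \<Rightarrow> 'a) set"
    and I :: "nat set" and as :: "(nat \<Rightarrow> 'a) list"
  assumes "good_class ar K mul p g h"
    and "\<forall>i\<in>{1..n}. A i \<in> K"
    and "subpower ar n A R"
    and "I \<subseteq> {1..n}"
    and "is_path ar mul A I (proj I R) as"
  shows "\<exists>bs. length bs = length as \<and>
           (\<forall>j<length as. bs ! j \<in> proj ({1..n} - I) R \<and> merge I (as ! j) (bs ! j) \<in> R) \<and>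
           is_path ar mul A {1..n} R (map2 (merge I) as bs)"
proof -
  define N where "N = {1..n}"
  obtain ys where ys: "length ys = length as" "\<forall>j<length as. restrict (ys!j) I = as!j"
       "is_path ar mul A (I \<union> (N - I)) (proj (I \<union> (N - I)) R) ys"
    using lift_all[OF assms, of "N - I"] unfolding N_def by blast
  have IN: "I \<union> (N - I) = N" using assms(4) unfolding N_def by blast
  have RP: "R \<subseteq> (\<Pi>\<^sub>E i\<in>N. univ (A i))" using assms(3) unfolding subpower_def N_def by blast
  have projN: "proj N R = R"
  proof -
    have "\<And>r. r \<in> R \<Longrightarrow> restrict r N = r" using RP by (meson PiE_restrict subsetD)
    then show ?thesis unfolding proj_def by force
  qed
  have path: "is_path ar mul A N R ys" using ys(3) IN projN by simp
  have ysR: "\<And>j. j < length ys \<Longrightarrow> ys!j \<in> R" using path unfolding is_path_def by auto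
  define bs where "bs = map (\<lambda>y. restrict y (N - I)) ys"
  have mrg: "merge I (as!j) (bs!j) = ys!j" if j: "j < length as" for j
  proof (rule ext)
    fix i
    have yE: "ys!j \<in> (\<Pi>\<^sub>E i\<in>N. univ (A i))" using RP ysR j ys(1) by auto
    show "merge I (as!j) (bs!j) i = (ys!j) i"
    proof (cases "i \<in> I")
      case True
      then show ?thesis using ys(2) j unfolding merge_def bs_def
        by (metis restrict_apply')
    next
      case False
      then show ?thesis
        using j ys(1) yE unfolding merge_def bs_def by (auto simp: PiE_def extensional_def)
    qed
  qed
  show ?thesis
  proof (intro exI[of _ bs] conjI allI impI)
    show "length bs = length as" using ys(1) unfolding bs_def by simp
  next
    fix j assume j: "j < length as"
    show "bs ! j \<in> proj ({1..n} - I) R"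
      using ysR[of j] j ys(1) unfolding bs_def proj_def N_def by auto
    show "merge I (as ! j) (bs ! j) \<in> R" using mrg[OF j] ysR[of j] j ys(1) by simp
  next
    have "map2 (merge I) as bs = ys"
    proof (rule nth_equalityI)
      show "length (map2 (merge I) as bs) = length ys" using ys(1) unfolding bs_def by simp
      fix j assume "j < length (map2 (merge I) as bs)"
      then have j: "j < length as" using ys(1) unfolding bs_def by simp
      then show "map2 (merge I) as bs ! j = ys ! j"
        using mrg[OF j] ys(1) unfolding bs_def by simp
    qed
    then show "is_path ar mul A {1..n} R (map2 (merge I) as bs)" using path unfolding N_def by simp
  qed
qed

end
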